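(* Let $k\geq 2$ be an integer and let $l\in\{1,2\}$. Then there are infinitely many balanced bipartite graphs $G$ with $\delta(G)=k$ and $f(G)=\frac{|V(G)|}{2}+l$.
   Context: All graphs are finite and simple. A balanced bipartite graph is a bipartite graph with a given bipartition $(V_1,V_2)$ where $|V_1|=|V_2|$. $\delta(G)$ denotes the minimum degree of $G$. The forest number $f(G)$ is the maximum cardinality of a subset $S\subseteq V(G)$ such that the induced subgraph $G[S]$ is a forest. *)

theory Defs
  imports Main
begin

definition simple_graph :: "'a set \<Rightarrow> ('a \<Rightarrow> 'a \<Rightarrow> bool) \<Rightarrow> bool" where
  "simple_graph V E \<longleftrightarrow> finite V \<and> (\<forall>u v. E u v \<longrightarrow> u \<in> V \<and> v \<in> V)
     \<and> (\<forall>u v. E u v \<longrightarrow> E v u) \<and> (\<forall>v. \<not> E v v)"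

definition balanced_bipartite ::
  "'a set \<Rightarrow> ('a \<Rightarrow> 'a \<Rightarrow> bool) \<Rightarrow> 'a set \<Rightarrow> 'a set \<Rightarrow> bool" where
  "balanced_bipartite V E V1 V2 \<longleftrightarrow> simple_graph V E \<and> V1 \<inter> V2 = {} \<and> V1 \<union> V2 = V
     \<and> card V1 = card V2
     \<and> (\<forall>u v. E u v \<longrightarrow> (u \<in> V1 \<and> v \<in> V2) \<or> (u \<in> V2 \<and> v \<in> V1))"

definition degree :: "'a set \<Rightarrow> ('a \<Rightarrow> 'a \<Rightarrow> bool) \<Rightarrow> 'a \<Rightarrow> nat" where
  "degree V E v = card {u \<in> V. E v u}"

definition min_degree :: "'a set \<Rightarrow> ('a \<Rightarrow> 'a \<Rightarrow> bool) \<Rightarrow> nat" where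
  "min_degree V E = Min (degree V E ` V)"

definition has_cycle_in :: "'a set \<Rightarrow> ('a \<Rightarrow> 'a \<Rightarrow> bool) \<Rightarrow> bool" where
  "has_cycle_in S E \<longleftrightarrow> (\<exists>xs. length xs \<ge> 3 \<and> distinct xs \<and> set xs \<subseteq> S
     \<and> (\<forall>i. Suc i < length xs \<longrightarrow> E (xs ! i) (xs ! Suc i)) \<and> E (last xs) (hd xs))"

definition induced_forest :: "'a set \<Rightarrow> ('a \<Rightarrow> 'a \<Rightarrow> bool) \<Rightarrow> 'a set \<Rightarrow> bool" where
  "induced_forest V E S \<longleftrightarrow> S \<subseteq> V \<and> \<not> has_cycle_in S E"

definition forest_number :: "'a set \<Rightarrow> ('a \<Rightarrow> 'a \<Rightarrow> bool) \<Rightarrow> nat" where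
  "forest_number V E = Max {card S | S. induced_forest V E S}"

end

theory Submission
  imports Defs
begin

definition Rg :: "nat \<Rightarrow> nat \<Rightarrow> nat \<Rightarrow> nat \<Rightarrow> nat \<Rightarrow> bool" where
  "Rg m k l i j \<longleftrightarrow> i < m \<and> j < m \<and> (l \<le> i \<or> (i*k \<le> j \<and> j < i*k+k))"

definition Eg :: "nat \<Rightarrow> nat \<Rightarrow> nat \<Rightarrow> nat \<Rightarrow> nat \<Rightarrow> bool" where
  "Eg m k l u v \<longleftrightarrow> (u < m \<and> m \<le> v \<and> Rg m k l u (v-m)) \<or> (v < m \<and> m \<le> u \<and> Rg m k l v (u-m))"

lemma two_elems:
  assumes "card X \<ge> 2"
  obtains a b where "a \<in> X" "b \<in> X" "a \<noteq> b"
proof -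
  from assms obtain a Y where "X = insert a Y" "a \<notin> Y" "1 \<le> card Y"
    using card_le_Suc_iff[of 1 X] by auto
  then obtain b where "b \<in> Y" by fastforce
  then show ?thesis using that \<open>X = insert a Y\<close> \<open>a \<notin> Y\<close> by blast
qed

lemma c4:
  assumes "distinct [a,b,c,d]" "{a,b,c,d} \<subseteq> S" "E a b" "E b c" "E c d" "E d a"
  shows "has_cycle_in S E"
  unfolding has_cycle_in_def
proof (intro exI[of _ "[a,b,c,d]"] conjI)
  show "\<forall>i. Suc i < length [a, b, c, d] \<longrightarrow> E ([a, b, c, d] ! i) ([a, b, c, d] ! Suc i)"
  proof (intro allI impI)
    fix i assume "Suc i < length [a, b, c, d]"
    then have "i = 0 \<or> i = 1 \<or> i = 2" by auto
    then show "E ([a, b, c, d] ! i) ([a, b, c, d] ! Suc i)" using assms by auto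
  qed
qed (use assms in auto)

lemma no_cycle:
  assumes sym: "\<And>u v. E u v \<Longrightarrow> E v u"
    and indep: "\<And>c c'. c \<in> C \<Longrightarrow> c' \<in> C \<Longrightarrow> \<not> E c c'"
    and one: "\<And>v u w. v \<in> S \<Longrightarrow> v \<notin> C \<Longrightarrow> u \<in> S \<Longrightarrow> w \<in> S \<Longrightarrow> E v u \<Longrightarrow> E v w \<Longrightarrow> u = w"
  shows "\<not> has_cycle_in S E"
proof
  assume "has_cycle_in S E"
  then obtain xs where len: "length xs \<ge> 3" and d: "distinct xs" and s: "set xs \<subseteq> S"
    and e: "\<forall>i. Suc i < length xs \<longrightarrow> E (xs ! i) (xs ! Suc i)" and el: "E (last xs) (hd xs)"
    unfolding has_cycle_in_def by blast
  define x0 where "x0 = xs!0"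
  define x1 where "x1 = xs!Suc 0"
  define x2 where "x2 = xs!Suc (Suc 0)"
  have l0: "0 < length xs" and l1: "Suc 0 < length xs" and l2: "Suc (Suc 0) < length xs"
    using len by linarith+
  have in0: "x0 \<in> S" using s nth_mem[OF l0] unfolding x0_def by blast
  have in1: "x1 \<in> S" using s nth_mem[OF l1] unfolding x1_def by blast
  have in2: "x2 \<in> S" using s nth_mem[OF l2] unfolding x2_def by blast
  have e01: "E x0 x1" using e l1 unfolding x0_def x1_def by blast
  have e12: "E x1 x2" using e l2 unfolding x1_def x2_def by blast
  have n02: "x0 \<noteq> x2" using nth_eq_iff_index_eq[OF d l0 l2] unfolding x0_def x2_def by simp
  have n10: "x1 \<noteq> x0" using nth_eq_iff_index_eq[OF d l1 l0] unfolding x0_def x1_def by simp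
  have n12: "x1 \<noteq> x2" using nth_eq_iff_index_eq[OF d l1 l2] unfolding x1_def x2_def by simp
  show False
  proof (cases "x1 \<in> C")
    case False
    then show ?thesis using one[OF in1 False in0 in2 sym[OF e01] e12] n02 by blast
  next
    case True
    have nc2: "x2 \<notin> C" using indep[OF True] e12 by blast
    show False
    proof (cases "length xs = 3")
      case True
      have "last xs = xs ! (length xs - 1)" using l0 by (intro last_conv_nth) auto
      then have "last xs = x2" unfolding x2_def using True by (simp add: numeral_3_eq_3)
      moreover have "hd xs = x0" unfolding x0_def using l0 by (simp add: hd_conv_nth)
      ultimately have "E x2 x0" using el by simp
      then show ?thesis using one[OF in2 nc2 in1 in0 sym[OF e12]] n10 by blast
    next
      case False
      then have l3: "Suc (Suc (Suc 0)) < length xs" using len by linarith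
      define x3 where "x3 = xs!Suc (Suc (Suc 0))"
      have in3: "x3 \<in> S" using s nth_mem[OF l3] unfolding x3_def by blast
      have e23: "E x2 x3" using e l3 unfolding x2_def x3_def by blast
      have "x1 \<noteq> x3" using nth_eq_iff_index_eq[OF d l1 l3] unfolding x1_def x3_def by simp
      then show ?thesis using one[OF in2 nc2 in1 in3 sym[OF e12] e23] by blast
    qed
  qed
qed

lemma Eg_sym: "Eg m k l u v \<Longrightarrow> Eg m k l v u"
  unfolding Eg_def by blast

lemma up_case1:
  assumes "l \<le> a" "a < m" "l \<le> a'" "a' < m" "a \<noteq> a'" "m \<le> b" "b < 2*m" "m \<le> b'" "b' < 2*m" "b \<noteq> b'"
    "a \<in> S" "a' \<in> S" "b \<in> S" "b' \<in> S"
  shows "has_cycle_in S (Eg m k l)"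
proof (rule c4[of a b a' b'])
  show "distinct [a, b, a', b']" using assms(1-10) by auto
  show "{a, b, a', b'} \<subseteq> S" using assms(11-14) by auto
  show "Eg m k l a b" using assms(1-10) by (simp add: Eg_def Rg_def)
  show "Eg m k l b a'" using assms(1-10) by (simp add: Eg_def Rg_def)
  show "Eg m k l a' b'" using assms(1-10) by (simp add: Eg_def Rg_def)
  show "Eg m k l b' a" using assms(1-10) by (simp add: Eg_def Rg_def)
qed
lemma up_case2:
  assumes "l \<le> a" "a < m" "1 \<le> l" "2 \<le> k" "2 \<le> m"
    "a \<in> S" "0 \<in> S" "m \<in> S" "m+1 \<in> S"
  shows "has_cycle_in S (Eg m k l)"
proof (rule c4[of 0 m a "m+1"])
  show "distinct [0, m, a, m+1]" using assms(1-5) by auto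
  show "{0, m, a, m+1} \<subseteq> S" using assms(6-9) by auto
  show "Eg m k l 0 m" using assms(1-5) by (simp add: Eg_def Rg_def)
  show "Eg m k l m a" using assms(1-5) by (simp add: Eg_def Rg_def)
  show "Eg m k l a (m+1)" using assms(1-5) by (simp add: Eg_def Rg_def)
  show "Eg m k l (m+1) 0" using assms(1-5) by (simp add: Eg_def Rg_def)
qed
lemma upper:
  assumes k: "k \<ge> 2" and l: "1 \<le> l" "l \<le> m" and m: "m \<ge> 2"
    and S: "S \<subseteq> {0..<2*m}" and c: "card S \<ge> m + l + 1"
  shows "has_cycle_in S (Eg m k l)"
proof -
  let ?L = "S \<inter> {0..<l}" and ?A = "S \<inter> {l..<m}" and ?B = "S \<inter> {m..<2*m}"
  have fin: "finite S" using S finite_subset by blast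
  have eq: "S = (?L \<union> ?A) \<union> ?B" using S l by auto
  have "card ((?L \<union> ?A) \<union> ?B) = card (?L \<union> ?A) + card ?B"
    by (rule card_Un_disjoint) (use fin l in auto)
  moreover have "card (?L \<union> ?A) = card ?L + card ?A"
    by (rule card_Un_disjoint) (use fin l in auto)
  ultimately have cs: "card S = card ?L + card ?A + card ?B" using eq by simp
  have "card ?L \<le> card {0..<l}" by (rule card_mono) auto
  then have cL: "card ?L \<le> l" by simp
  have "card ?A \<le> card {l..<m}" by (rule card_mono) auto
  then have "card ?A \<le> m - l" by simp
  then have cA: "card ?A + l \<le> m" using l(2) by arith
  have "card ?B \<le> card {m..<2*m}" by (rule card_mono) auto
  then have cB: "card ?B \<le> m" by simp
  show ?thesis
  proof (cases "card ?A \<ge> 2 \<and> card ?B \<ge> 2")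
    case True
    from True have "card ?A \<ge> 2" by simp
    then obtain a a' where a: "a \<in> ?A" "a' \<in> ?A" "a \<noteq> a'" by (rule two_elems)
    from True have "card ?B \<ge> 2" by simp
    then obtain b b' where b: "b \<in> ?B" "b' \<in> ?B" "b \<noteq> b'" by (rule two_elems)
    show ?thesis
      by (rule up_case1[of l a m a' b b' S k]) (use a b in auto)
  next
    case False
    show ?thesis
    proof (cases "card ?A \<ge> 2")
      case False
      then have "card ?B = m" "card ?L = l" "card ?A = 1" using cs cA cB cL c by linarith+
      have B: "?B = {m..<2*m}"
        by (rule card_subset_eq) (use \<open>card ?B = m\<close> in auto)
      have L: "?L = {0..<l}"
        by (rule card_subset_eq) (use \<open>card ?L = l\<close> in auto)
      from \<open>card ?A = 1\<close> obtain a0 where "?A = {a0}" by (rule card_1_singletonE)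
      then have a: "a0 \<in> ?A" by simp
      have "0 \<in> ?L" using l by (subst L) simp
      then have "0 \<in> S" by simp
      have "m \<in> ?B" "m+1 \<in> ?B" using m by (subst B, simp)+
      then have "m \<in> S" "m+1 \<in> S" by simp_all
      show ?thesis
        by (rule up_case2[of l a0 m k S]) (use a l k m \<open>0 \<in> S\<close> \<open>m \<in> S\<close> \<open>m+1 \<in> S\<close> in auto)
    next
      case True
      with \<open>\<not> (card ?A \<ge> 2 \<and> card ?B \<ge> 2)\<close> have "\<not> card ?B \<ge> 2" by simp
      then show ?thesis using cs cA cB cL c l(1) by linarith
    qed
  qed
qed

lemma main:
  assumes k: "k \<ge> 2" and l: "1 \<le> l" "l \<le> 2" and m: "m \<ge> 3*k+2"
  shows "balanced_bipartite {0..<2*m} (Eg m k l) {0..<m} {m..<2*m}"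
    and "min_degree {0..<2*m} (Eg m k l) = k"
    and "forest_number {0..<2*m} (Eg m k l) = m + l"
proof -
  let ?V = "{0..<2*m}" and ?E = "Eg m k l"
  show "balanced_bipartite ?V ?E {0..<m} {m..<2*m}"
    unfolding balanced_bipartite_def simple_graph_def
    by (auto simp: Eg_def Rg_def)
  have "l*k \<le> 2*k" using l by simp
  then have lk: "l*k + k \<le> m" using m by linarith
  have fin: "\<And>v. finite {u \<in> ?V. ?E v u}" by simp
  have d0: "{u \<in> ?V. ?E 0 u} = {m..<m+k}"
    using k l m by (auto simp: Eg_def Rg_def)
  have deg0: "degree ?V ?E 0 = k" unfolding degree_def d0 by simp
  have dge: "degree ?V ?E v \<ge> k" if v: "v \<in> ?V" for v
  proof -
    consider "v < l" | "l \<le> v" "v < m" | "m \<le> v" "v < 2*m" using v by fastforce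
    then show ?thesis
    proof cases
      case 1
      have "v*k + k \<le> l*k" using mult_le_mono1[of "Suc v" l k] 1 by simp
      then have "{m+v*k..<m+v*k+k} \<subseteq> {u \<in> ?V. ?E v u}"
        using 1 lk l by (auto simp: Eg_def Rg_def)
      from card_mono[OF fin this] show ?thesis unfolding degree_def by simp
    next
      case 2
      then have "{m..<2*m} \<subseteq> {u \<in> ?V. ?E v u}" by (auto simp: Eg_def Rg_def)
      from card_mono[OF fin this] show ?thesis using m unfolding degree_def by simp
    next
      case 3
      then have "{l..<m} \<subseteq> {u \<in> ?V. ?E v u}" by (auto simp: Eg_def Rg_def)
      from card_mono[OF fin this] show ?thesis using m l unfolding degree_def by simp
    qed
  qed
  show "min_degree ?V ?E = k"
    unfolding min_degree_def
  proof (rule Min_eqI)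
    show "finite (degree ?V ?E ` ?V)" by simp
    show "\<And>y. y \<in> degree ?V ?E ` ?V \<Longrightarrow> k \<le> y" using dge by auto
    show "k \<in> degree ?V ?E ` ?V" using deg0 m by (intro image_eqI[of _ _ 0]) auto
  qed
  let ?S0 = "{0..<l} \<union> {m..<2*m}"
  have forest0: "induced_forest ?V ?E ?S0"
    unfolding induced_forest_def
  proof
    show "?S0 \<subseteq> ?V" using l m by auto
    show "\<not> has_cycle_in ?S0 ?E"
    proof (rule no_cycle[where C = "{0..<l}"])
      show "\<And>u v. ?E u v \<Longrightarrow> ?E v u" by (rule Eg_sym)
      show "\<And>c c'. c \<in> {0..<l} \<Longrightarrow> c' \<in> {0..<l} \<Longrightarrow> \<not> ?E c c'"
        using l m by (auto simp: Eg_def)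
      fix v u w
      assume v: "v \<in> ?S0" "v \<notin> {0..<l}" and u: "u \<in> ?S0" and w: "w \<in> ?S0"
        and e: "?E v u" "?E v w"
      have vm: "m \<le> v" using v by auto
      have "u < l" "u*k \<le> v - m" "v - m < u*k + k"
        using u e(1) vm l m by (auto simp: Eg_def Rg_def)
      then have "(v-m) div k = u" by (intro div_nat_eqI) (auto simp: mult.commute)
      moreover have "w < l" "w*k \<le> v - m" "v - m < w*k + k"
        using w e(2) vm l m by (auto simp: Eg_def Rg_def)
      then have "(v-m) div k = w" by (intro div_nat_eqI) (auto simp: mult.commute)
      ultimately show "u = w" by simp
    qed
  qed
  have cS0: "card ?S0 = m + l"
    using l m by (subst card_Un_disjoint) auto
  show "forest_number ?V ?E = m + l"
    unfolding forest_number_def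
  proof (rule Max_eqI)
    show "finite {card S |S. induced_forest ?V ?E S}"
    proof (rule finite_subset[of _ "{0..card ?V}"])
      show "{card S |S. induced_forest ?V ?E S} \<subseteq> {0..card ?V}"
      proof
        fix y assume "y \<in> {card S |S. induced_forest ?V ?E S}"
        then obtain S where "y = card S" "S \<subseteq> ?V" unfolding induced_forest_def by blast
        moreover have "card S \<le> card ?V" by (rule card_mono) (use calculation in auto)
        ultimately show "y \<in> {0..card ?V}" by simp
      qed
    qed simp
    show "m + l \<in> {card S |S. induced_forest ?V ?E S}" using forest0 cS0 by force
    fix y assume "y \<in> {card S |S. induced_forest ?V ?E S}"
    then obtain S where y: "y = card S" and S: "S \<subseteq> ?V" "\<not> has_cycle_in S ?E"
      unfolding induced_forest_def by blast
    show "y \<le> m + l"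
    proof (rule ccontr)
      assume "\<not> y \<le> m + l"
      then have "card S \<ge> m + l + 1" using y by simp
      from upper[OF k _ _ _ S(1) this] l m S(2) show False by simp
    qed
  qed
qed

theorem theorem2p7:
  fixes k l :: nat
  assumes "k \<ge> 2" and "l \<in> {1, 2}"
  shows "\<forall>N. \<exists>(V :: nat set) E V1 V2. card V \<ge> N \<and> balanced_bipartite V E V1 V2
           \<and> min_degree V E = k \<and> 2 * forest_number V E = card V + 2 * l"
proof
  fix N
  let ?m = "N + 3*k + 2"
  have l: "1 \<le> l" "l \<le> 2" using assms(2) by auto
  note M = main[OF assms(1) l, of ?m]
  show "\<exists>(V :: nat set) E V1 V2. card V \<ge> N \<and> balanced_bipartite V E V1 V2
           \<and> min_degree V E = k \<and> 2 * forest_number V E = card V + 2 * l"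
    by (intro exI[of _ "{0..<2*?m}"] exI[of _ "Eg ?m k l"] exI[of _ "{0..<?m}"] exI[of _ "{?m..<2*?m}"])
      (use M in auto)
qed

end
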